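(* For every 3-uniform hypergraph $\mathcal{H}$ there exists a graph $G$ in which every edge is contained in a triangle such that the domination game on $\mathcal{H}$ is equivalent to the domination game on $G$; and conversely, for every graph $G$ in which every edge is contained in a triangle there exists a 3-uniform hypergraph $\mathcal{H}$ such that the domination game on $\mathcal{H}$ is equivalent to the domination game on $G$.
   Context: Hypergraphs and graphs are finite. Two distinct vertices are adjacent if some edge contains both; $N[v]$ is $v$ together with its adjacent vertices, $N[S]=\bigcup_{v\in S}N[v]$. In the domination game, two players alternately choose vertices $v_1,v_2,\dots$; with $D_i=\{v_1,\dots,v_i\}$, a sequence $v_1,\dots,v_d$ is a legal game if $N[v_i]\setminus N[D_{i-1}]\ne\emptyset$ for all $2\le i\le d$ and $N[D_d]$ is the whole vertex set. Two domination games, on $\mathcal{H}_1$ and $\mathcal{H}_2$, are equivalent if $V(\mathcal{H}_1)=V(\mathcal{H}_2)$ and every sequence $v_1,\dots,v_d$ is a legal game on $\mathcal{H}_1$ iff it is a legal game on $\mathcal{H}_2$. *)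

theory Defs
  imports Main
begin

definition hypergraph :: "'a set \<Rightarrow> 'a set set \<Rightarrow> bool" where
  "hypergraph V E \<longleftrightarrow> finite V \<and> (\<forall>e\<in>E. e \<subseteq> V)"

definition three_uniform :: "'a set \<Rightarrow> 'a set set \<Rightarrow> bool" where
  "three_uniform V E \<longleftrightarrow> hypergraph V E \<and> (\<forall>e\<in>E. card e = 3)"

definition graph :: "'a set \<Rightarrow> 'a set set \<Rightarrow> bool" where
  "graph V E \<longleftrightarrow> hypergraph V E \<and> (\<forall>e\<in>E. card e = 2)"

definition every_edge_in_triangle :: "'a set set \<Rightarrow> bool" where
  "every_edge_in_triangle E \<longleftrightarrow>
     (\<forall>u v. {u, v} \<in> E \<longrightarrow> (\<exists>w. {u, w} \<in> E \<and> {v, w} \<in> E))"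

definition adjacent :: "'a set set \<Rightarrow> 'a \<Rightarrow> 'a \<Rightarrow> bool" where
  "adjacent E u v \<longleftrightarrow> u \<noteq> v \<and> (\<exists>e\<in>E. u \<in> e \<and> v \<in> e)"

definition closed_nbhd :: "'a set \<Rightarrow> 'a set set \<Rightarrow> 'a \<Rightarrow> 'a set" where
  "closed_nbhd V E v = {v} \<union> {u\<in>V. adjacent E v u}"

definition closed_nbhd_set :: "'a set \<Rightarrow> 'a set set \<Rightarrow> 'a set \<Rightarrow> 'a set" where
  "closed_nbhd_set V E S = (\<Union>v\<in>S. closed_nbhd V E v)"

text \<open>A legal domination game: list of vertices v_1..v_d (0-based index i;
  take i vs are the vertices chosen before position i).\<close>
definition legal_game :: "'a set \<Rightarrow> 'a set set \<Rightarrow> 'a list \<Rightarrow> bool" where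
  "legal_game V E vs \<longleftrightarrow>
     set vs \<subseteq> V \<and>
     (\<forall>i. 1 \<le> i \<and> i < length vs \<longrightarrow>
        closed_nbhd V E (vs ! i) - closed_nbhd_set V E (set (take i vs)) \<noteq> {}) \<and>
     closed_nbhd_set V E (set vs) = V"

definition equivalent_games :: "'a set \<Rightarrow> 'a set set \<Rightarrow> 'a set \<Rightarrow> 'a set set \<Rightarrow> bool" where
  "equivalent_games V1 E1 V2 E2 \<longleftrightarrow>
     V1 = V2 \<and> (\<forall>vs. legal_game V1 E1 vs \<longleftrightarrow> legal_game V2 E2 vs)"

end

theory Submission
  imports Defs
begin

lemma legal_eq:
  assumes "adjacent E1 = adjacent E2"
  shows "legal_game V E1 = legal_game V E2"
proof -
  have "closed_nbhd V E1 = closed_nbhd V E2"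
    using assms by (auto simp: closed_nbhd_def fun_eq_iff)
  hence "closed_nbhd_set V E1 = closed_nbhd_set V E2"
    by (auto simp: closed_nbhd_set_def fun_eq_iff)
  thus ?thesis using \<open>closed_nbhd V E1 = closed_nbhd V E2\<close>
    by (auto simp: legal_game_def fun_eq_iff)
qed

lemma card2_eq: "card e = 2 \<Longrightarrow> u \<in> e \<Longrightarrow> v \<in> e \<Longrightarrow> u \<noteq> v \<Longrightarrow> e = {u, v}"
  by (auto simp: card_2_iff)

lemma card2_pair: "card {u, v} = 2 \<Longrightarrow> u \<noteq> v"
  by (cases "u = v") auto

lemma dir1:
  assumes "three_uniform V E"
  shows "\<exists>V' E'. graph V' E' \<and> every_edge_in_triangle E' \<and> equivalent_games V E V' E'"
proof -
  define E' where "E' = {{u,v} | u v. adjacent E u v}"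
  have adj: "adjacent E' = adjacent E"
  proof (intro ext iffI)
    fix u v assume "adjacent E' u v"
    then obtain x y where "adjacent E x y" "u \<in> {x,y}" "v \<in> {x,y}" "u \<noteq> v"
      unfolding adjacent_def E'_def by blast
    thus "adjacent E u v" unfolding adjacent_def by blast
  next
    fix u v assume "adjacent E u v"
    thus "adjacent E' u v" unfolding E'_def adjacent_def by blast
  qed
  have g: "graph V E'"
    using assms unfolding graph_def hypergraph_def three_uniform_def E'_def adjacent_def
    by auto
  have t: "every_edge_in_triangle E'"
    unfolding every_edge_in_triangle_def
  proof (intro allI impI)
    fix u v assume "{u, v} \<in> E'"
    then obtain x y where xy: "{u,v} = {x,y}" "adjacent E x y" unfolding E'_def by blast
    then obtain e where e: "e \<in> E" "u \<in> e" "v \<in> e" "u \<noteq> v"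
      unfolding adjacent_def by (auto simp: doubleton_eq_iff)
    have "card e = 3" using e assms unfolding three_uniform_def by auto
    then obtain a b c where abc: "e = {a,b,c}" "a \<noteq> b" "a \<noteq> c" "b \<noteq> c"
      by (auto simp: card_3_iff)
    obtain w where w: "w \<in> e" "w \<noteq> u" "w \<noteq> v"
      using abc e by blast
    have "adjacent E u w" "adjacent E v w" using w e unfolding adjacent_def by auto
    thus "\<exists>w. {u, w} \<in> E' \<and> {v, w} \<in> E'" unfolding E'_def by blast
  qed
  show ?thesis using g t legal_eq[OF adj]
    unfolding equivalent_games_def by metis
qed

lemma dir2:
  assumes "graph V E" "every_edge_in_triangle E"
  shows "\<exists>V' E'. three_uniform V' E' \<and> equivalent_games V' E' V E"
proof -
  define E' where "E' = {{u,v,w} | u v w. {u,v} \<in> E \<and> {v,w} \<in> E \<and> {u,w} \<in> E}"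
  have c2: "\<And>e. e \<in> E \<Longrightarrow> card e = 2" using assms(1) unfolding graph_def by auto
  have sub: "\<And>e. e \<in> E \<Longrightarrow> e \<subseteq> V" using assms(1) unfolding graph_def hypergraph_def by auto
  have adjE: "adjacent E u v \<longleftrightarrow> {u,v} \<in> E" for u v
  proof
    assume "adjacent E u v"
    then obtain e where "e \<in> E" "u \<in> e" "v \<in> e" "u \<noteq> v" unfolding adjacent_def by blast
    thus "{u,v} \<in> E" using card2_eq[OF c2[OF \<open>e \<in> E\<close>]] by simp
  next
    assume "{u,v} \<in> E"
    hence "u \<noteq> v" using card2_pair[OF c2[OF \<open>{u,v} \<in> E\<close>]] by simp
    thus "adjacent E u v" using \<open>{u,v} \<in> E\<close> unfolding adjacent_def
      by (intro conjI bexI[of _ "{u,v}"]) auto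
  qed
  have adj: "adjacent E' = adjacent E"
  proof (intro ext iffI)
    fix u v assume "adjacent E' u v"
    then obtain x y z where "{x,y} \<in> E" "{y,z} \<in> E" "{x,z} \<in> E" "u \<in> {x,y,z}" "v \<in> {x,y,z}" "u \<noteq> v"
      unfolding adjacent_def E'_def by blast
    hence "{u,v} \<in> E"
    proof -
      have sym: "\<And>a b. {a,b} = {b,a}" by blast
      show ?thesis using \<open>u \<in> {x,y,z}\<close> \<open>v \<in> {x,y,z}\<close> \<open>u \<noteq> v\<close>
        \<open>{x,y} \<in> E\<close> \<open>{y,z} \<in> E\<close> \<open>{x,z} \<in> E\<close> sym[of x y] sym[of y z] sym[of x z]
        by (elim insertE emptyE) simp_all
    qed
    thus "adjacent E u v" using adjE by simp
  next
    fix u v assume "adjacent E u v"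
    hence "{u,v} \<in> E" using adjE by simp
    then obtain w where "{u,w} \<in> E" "{v,w} \<in> E" using assms(2) unfolding every_edge_in_triangle_def by blast
    hence "{u,v,w} \<in> E'" using \<open>{u,v} \<in> E\<close> unfolding E'_def
      by (intro CollectI exI[of _ u] exI[of _ v] exI[of _ w]) simp
    thus "adjacent E' u v" using \<open>adjacent E u v\<close> unfolding adjacent_def
      by (intro conjI bexI[of _ "{u,v,w}"]) auto
  qed
  have tu: "three_uniform V E'"
    unfolding three_uniform_def hypergraph_def
  proof (intro conjI ballI)
    show "finite V" using assms(1) unfolding graph_def hypergraph_def by auto
  next
    fix e assume "e \<in> E'"
    then obtain u v w where e: "e = {u,v,w}" "{u,v} \<in> E" "{v,w} \<in> E" "{u,w} \<in> E"
      unfolding E'_def by blast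
    have d: "u \<noteq> v" "v \<noteq> w" "u \<noteq> w"
      using card2_pair[OF c2[OF e(2)]] card2_pair[OF c2[OF e(3)]] card2_pair[OF c2[OF e(4)]] by simp_all
    show "e \<subseteq> V" using e sub by blast
    show "card e = 3" using e d by auto
  qed
  show ?thesis using tu legal_eq[OF adj]
    unfolding equivalent_games_def by metis
qed

theorem proposition3:
  shows "(\<forall>(V::'a set) E. three_uniform V E \<longrightarrow>
            (\<exists>V' E'. graph V' E' \<and> every_edge_in_triangle E' \<and> equivalent_games V E V' E'))
       \<and> (\<forall>(V::'a set) E. graph V E \<and> every_edge_in_triangle E \<longrightarrow>
            (\<exists>V' E'. three_uniform V' E' \<and> equivalent_games V' E' V E))"
  using dir1 dir2 by blast

end
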